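(* Let $\mathcal{S}\subseteq\mathcal{L}$, let $\mathcal{AF}_{\vdash}=(\vdash,\overline{\cdot},\mathsf{id})$ be contrapositable with $\vdash$ satisfying Cut, and let $\Theta$ be a maximal $\mathcal{AF}_{\vdash}(\mathcal{S})$-consistent subset of $\mathcal{S}$. Then $\mathit{Arg}_{\vdash}(\Theta)$ is a stable extension of $\mathcal{AF}_{\mathsf{con}}(\mathcal{S})$.
   Context: $\mathcal{L}$ is a set of formulas; ${\vdash}\subseteq\wp_{\sf fin}(\mathcal{L})\times\mathcal{L}$ is arbitrary and $\overline{\cdot}:\mathcal{L}\to\wp(\mathcal{L})$. $\mathit{Arg}_{\vdash}(\mathcal{S})=\{(\Gamma,\gamma):\Gamma\subseteq\mathcal{S}\text{ finite},\Gamma\vdash\gamma\}$. For a relation $\vdash'$, $\mathcal{AF}_{\vdash'}(\mathcal{S})$ has arguments $\mathit{Arg}_{\vdash'}(\mathcal{S})$, with $(\Gamma,\gamma)$ attacking $(\Gamma',\gamma')$ iff $\gamma\in\overline{\lambda}$ for some $\lambda\in\Gamma'$. A stable extension is a conflict-free set of arguments that attacks every argument not in it. $\vdash^{+\phi}$ is the transitive closure of ${\vdash}\cup\{(\emptyset,\phi)\}$; Cut: for every $\phi$ and finite $\Gamma,\Delta$, if $\Gamma\vdash\phi$ and $\Delta\vdash^{+\phi}\gamma$ then $\Gamma\cup\Delta\vdash\gamma$. Contrapositable: for all finite $\Theta$, if $\Theta\vdash\gamma'$ with $\gamma'\in\overline{\gamma}$, then for every $\sigma\in\Theta$, $(\Theta\cup\{\gamma\})\setminus\{\sigma\}\vdash\sigma'$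 for some $\sigma'\in\overline{\sigma}$. $\Theta\subseteq\mathcal{S}$ is $\mathcal{AF}_{\vdash}(\mathcal{S})$-inconsistent iff there are $\Theta'\subseteq\Theta$ and $\gamma\in\Theta'$ with $\Theta'\setminus\{\gamma\}\vdash\gamma'$ for some $\gamma'\in\overline{\gamma}$, consistent otherwise; maximal consistent = consistent with no consistent proper superset within $\mathcal{S}$. $\vdash_{\mathsf{con}}=\{(\Gamma,\gamma):\Gamma\vdash\gamma,\ \Gamma\text{ consistent}\}$ and $\mathcal{AF}_{\mathsf{con}}(\mathcal{S})=\mathcal{AF}_{\vdash_{\mathsf{con}}}(\mathcal{S})$. *)

theory Defs
  imports Main
begin

type_synonym 'f cons_rel = "('f set \<times> 'f) set"

definition Arg :: "'f cons_rel \<Rightarrow> 'f set \<Rightarrow> ('f set \<times> 'f) set" where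
  "Arg D S = {(\<Gamma>, \<gamma>). \<Gamma> \<subseteq> S \<and> finite \<Gamma> \<and> (\<Gamma>, \<gamma>) \<in> D}"

definition attacks :: "('f \<Rightarrow> 'f set) \<Rightarrow> ('f set \<times> 'f) \<Rightarrow> ('f set \<times> 'f) \<Rightarrow> bool" where
  "attacks ctr a b \<longleftrightarrow> (\<exists>l\<in>fst b. snd a \<in> ctr l)"

definition stable_extension :: "'f cons_rel \<Rightarrow> ('f \<Rightarrow> 'f set) \<Rightarrow> 'f set \<Rightarrow> ('f set \<times> 'f) set \<Rightarrow> bool" where
  "stable_extension D ctr S E \<longleftrightarrow>
     E \<subseteq> Arg D S \<and>
     (\<forall>a\<in>E. \<forall>b\<in>E. \<not> attacks ctr a b) \<and>
     (\<forall>b\<in>Arg D S - E. \<exists>a\<in>E. attacks ctr a b)"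

text \<open>The relation |-^{+phi}: transitive closure of D \<union> {({}, phi)}, i.e. the least
  relation containing it and closed under transitivity (cut on one formula).\<close>
inductive plus_rel :: "'f cons_rel \<Rightarrow> 'f \<Rightarrow> 'f set \<Rightarrow> 'f \<Rightarrow> bool" for D \<phi> where
  base: "(\<Gamma>, \<gamma>) \<in> D \<Longrightarrow> plus_rel D \<phi> \<Gamma> \<gamma>"
| ax: "plus_rel D \<phi> {} \<phi>"
| trans: "plus_rel D \<phi> \<Gamma> \<psi> \<Longrightarrow> plus_rel D \<phi> \<Delta> \<gamma> \<Longrightarrow> \<psi> \<in> \<Delta> \<Longrightarrow>
          plus_rel D \<phi> (\<Gamma> \<union> (\<Delta> - {\<psi>})) \<gamma>"

definition satisfies_cut :: "'f cons_rel \<Rightarrow> bool" where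
  "satisfies_cut D \<longleftrightarrow>
     (\<forall>\<phi> \<Gamma> \<Delta> \<gamma>. finite \<Gamma> \<longrightarrow> finite \<Delta> \<longrightarrow> (\<Gamma>, \<phi>) \<in> D \<longrightarrow> plus_rel D \<phi> \<Delta> \<gamma>
        \<longrightarrow> (\<Gamma> \<union> \<Delta>, \<gamma>) \<in> D)"

definition contrapositable :: "'f cons_rel \<Rightarrow> ('f \<Rightarrow> 'f set) \<Rightarrow> bool" where
  "contrapositable D ctr \<longleftrightarrow>
     (\<forall>\<Theta> \<gamma> \<gamma>'. finite \<Theta> \<longrightarrow> (\<Theta>, \<gamma>') \<in> D \<longrightarrow> \<gamma>' \<in> ctr \<gamma> \<longrightarrow>
        (\<forall>\<sigma>\<in>\<Theta>. \<exists>\<sigma>'\<in>ctr \<sigma>. ((\<Theta> \<union> {\<gamma>}) - {\<sigma>}, \<sigma>') \<in> D))"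

definition inconsistent :: "'f cons_rel \<Rightarrow> ('f \<Rightarrow> 'f set) \<Rightarrow> 'f set \<Rightarrow> bool" where
  "inconsistent D ctr \<Theta> \<longleftrightarrow>
     (\<exists>\<Theta>'\<subseteq>\<Theta>. \<exists>\<gamma>\<in>\<Theta>'. \<exists>\<gamma>'\<in>ctr \<gamma>. (\<Theta>' - {\<gamma>}, \<gamma>') \<in> D)"

abbreviation consistent :: "'f cons_rel \<Rightarrow> ('f \<Rightarrow> 'f set) \<Rightarrow> 'f set \<Rightarrow> bool" where
  "consistent D ctr \<Theta> \<equiv> \<not> inconsistent D ctr \<Theta>"

definition maximal_consistent :: "'f cons_rel \<Rightarrow> ('f \<Rightarrow> 'f set) \<Rightarrow> 'f set \<Rightarrow> 'f set \<Rightarrow> bool" where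
  "maximal_consistent D ctr S \<Theta> \<longleftrightarrow>
     \<Theta> \<subseteq> S \<and> consistent D ctr \<Theta> \<and>
     (\<forall>\<Theta>'. \<Theta> \<subset> \<Theta>' \<and> \<Theta>' \<subseteq> S \<longrightarrow> \<not> consistent D ctr \<Theta>')"

definition con_rel :: "'f cons_rel \<Rightarrow> ('f \<Rightarrow> 'f set) \<Rightarrow> 'f cons_rel" where
  "con_rel D ctr = {(\<Gamma>, \<gamma>). (\<Gamma>, \<gamma>) \<in> D \<and> consistent D ctr \<Gamma>}"

end

theory Submission
  imports Defs
begin

lemma incons_mono: "inconsistent D ctr A \<Longrightarrow> A \<subseteq> B \<Longrightarrow> inconsistent D ctr B"
  unfolding inconsistent_def by (meson order_trans)

theorem lemma9:
  fixes D :: "'f cons_rel" and ctr :: "'f \<Rightarrow> 'f set" and S \<Theta> :: "'f set"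
  assumes fin: "\<forall>(\<Gamma>, \<gamma>)\<in>D. finite \<Gamma>"
    and contra: "contrapositable D ctr"
    and cut: "satisfies_cut D"
    and max: "maximal_consistent D ctr S \<Theta>"
  shows "stable_extension (con_rel D ctr) ctr S (Arg D \<Theta>)"
proof -
  have TS: "\<Theta> \<subseteq> S" and Tc: "consistent D ctr \<Theta>"
    and Tm: "\<And>T'. \<Theta> \<subset> T' \<Longrightarrow> T' \<subseteq> S \<Longrightarrow> inconsistent D ctr T'"
    using max unfolding maximal_consistent_def by auto
  have finD: "\<And>G g. (G, g) \<in> D \<Longrightarrow> finite G" using fin by auto
  have A1: "Arg D \<Theta> \<subseteq> Arg (con_rel D ctr) S"
  proof
    fix x assume "x \<in> Arg D \<Theta>"
    then obtain G g where x: "x = (G, g)" "G \<subseteq> \<Theta>" "finite G" "(G, g) \<in> D"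
      unfolding Arg_def by auto
    have "consistent D ctr G" using Tc incons_mono x(2) by blast
    then show "x \<in> Arg (con_rel D ctr) S" using x TS unfolding Arg_def con_rel_def by auto
  qed
  have A2: "\<forall>a\<in>Arg D \<Theta>. \<forall>b\<in>Arg D \<Theta>. \<not> attacks ctr a b"
  proof (intro ballI notI)
    fix a b assume a: "a \<in> Arg D \<Theta>" and b: "b \<in> Arg D \<Theta>" and at: "attacks ctr a b"
    obtain G g where ag: "a = (G, g)" "G \<subseteq> \<Theta>" "finite G" "(G, g) \<in> D"
      using a unfolding Arg_def by auto
    obtain l where l: "l \<in> fst b" "g \<in> ctr l" using at ag unfolding attacks_def by auto
    have lT: "l \<in> \<Theta>" using b l unfolding Arg_def by auto
    obtain g' where g': "g' \<in> ctr l" "(G - {l}, g') \<in> D"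
    proof (cases "l \<in> G")
      case True
      then obtain s where "s \<in> ctr l" "((G \<union> {l}) - {l}, s) \<in> D"
        using contra ag l unfolding contrapositable_def by blast
      moreover have "(G \<union> {l}) - {l} = G - {l}" by auto
      ultimately show ?thesis using that by auto
    next
      case False
      then show ?thesis using that ag l by auto
    qed
    have "inconsistent D ctr \<Theta>" unfolding inconsistent_def
      apply (rule exI[of _ "G \<union> {l}"])
      using ag lT g' by auto
    then show False using Tc by simp
  qed
  have A3: "\<forall>b\<in>Arg (con_rel D ctr) S - Arg D \<Theta>. \<exists>a\<in>Arg D \<Theta>. attacks ctr a b"
  proof
    fix b assume b: "b \<in> Arg (con_rel D ctr) S - Arg D \<Theta>"
    obtain G g where bg: "b = (G, g)" "G \<subseteq> S" "finite G" "(G, g) \<in> D"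
      using b unfolding Arg_def con_rel_def by auto
    have "\<not> G \<subseteq> \<Theta>" using b bg unfolding Arg_def by auto
    then obtain l where l: "l \<in> G" "l \<notin> \<Theta>" by auto
    have "inconsistent D ctr (insert l \<Theta>)" using Tm l bg TS by blast
    then obtain T g0 g0' where T: "T \<subseteq> insert l \<Theta>" "g0 \<in> T" "g0' \<in> ctr g0" "(T - {g0}, g0') \<in> D"
      unfolding inconsistent_def by blast
    have lT: "l \<in> T"
    proof (rule ccontr)
      assume "l \<notin> T"
      then have "T \<subseteq> \<Theta>" using T by auto
      then have "inconsistent D ctr \<Theta>" using T unfolding inconsistent_def by blast
      then show False using Tc by simp
    qed
    have finT: "finite (T - {g0})" using finD T(4) .
    obtain l' where l': "l' \<in> ctr l" "(T - {l}, l') \<in> D"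
    proof (cases "g0 = l")
      case True then show ?thesis using that T by auto
    next
      case False
      then have "l \<in> T - {g0}" using lT by auto
      then obtain s where "s \<in> ctr l" "(((T - {g0}) \<union> {g0}) - {l}, s) \<in> D"
        using contra T finT unfolding contrapositable_def by blast
      moreover have "((T - {g0}) \<union> {g0}) - {l} = T - {l}" using T(2) by auto
      ultimately show ?thesis using that by auto
    qed
    have "(T - {l}, l') \<in> Arg D \<Theta>" unfolding Arg_def using l' T finD[OF l'(2)] by auto
    moreover have "attacks ctr (T - {l}, l') b" unfolding attacks_def using bg l l' by auto
    ultimately show "\<exists>a\<in>Arg D \<Theta>. attacks ctr a b" by blast
  qed
  show ?thesis unfolding stable_extension_def using A1 A2 A3 by blast
qed

end
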